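(* Let $k\ge1$ and let $G_{k+1}=H_1\star_{C_1}H_2\star_{C_2}\cdots H_k\star_{C_k}H_{k+1}$ be an iterated amalgamated free product, where each $C_i$ embeds in $H_i$ and in $H_{i+1}$. Suppose for some $2\le n\le\infty$ the image of each $C_i$ in $H_i$ and in $H_{i+1}$ is $n$-RF (i.e. the pairs $(H_i,C_i)$ and $(H_{i+1},C_i)$ are $n$-RF). Then the subgroups $G_k=H_1\star_{C_1}\cdots H_k$ and $H_{k+1}$ are both $n$-RF in $G_{k+1}$, i.e. $(G_{k+1},G_k)$ and $(G_{k+1},H_{k+1})$ are $n$-RF.
   Context: For a group $G$, subgroup $D$, and $2\le n\le\infty$: $a\in G\setminus D$ is $n$-RF rel $D$ if $a^{e_1}d_1\cdots a^{e_k}d_k\ne\mathrm{id}$ for all $k\ge1$, $e_i\in\{\pm1\}$, $d_i\in D$ such that $d_i\ne\mathrm{id}$ whenever $e_i=-e_{i+1}$ (indices mod $k$), and fewer than $n$ of the $e_i$ are $+1$ and fewer than $n$ are $-1$. The pair $(G,D)$ is $n$-RF if every element of $G\setminus D$ is $n$-RF rel $D$. *)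

theory Defs
  imports "HOL-Algebra.Algebra" "HOL-Library.Extended_Nat"
begin

definition rf_word_prod :: "('a, 'b) monoid_scheme \<Rightarrow> 'a \<Rightarrow> (bool \<times> 'a) list \<Rightarrow> 'a" where
  "rf_word_prod G a ws =
     foldr (\<lambda>(e, d) x. ((if e then a else inv\<^bsub>G\<^esub> a) \<otimes>\<^bsub>G\<^esub> d) \<otimes>\<^bsub>G\<^esub> x) ws \<one>\<^bsub>G\<^esub>"

definition n_RF_rel :: "('a, 'b) monoid_scheme \<Rightarrow> 'a set \<Rightarrow> enat \<Rightarrow> 'a \<Rightarrow> bool" where
  "n_RF_rel G D n a \<longleftrightarrow>
     a \<in> carrier G - D \<and>
     (\<forall>ws. ws \<noteq> [] \<longrightarrow> snd ` set ws \<subseteq> D \<longrightarrow>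
        (\<forall>i < length ws. fst (ws ! i) \<noteq> fst (ws ! ((i + 1) mod length ws)) \<longrightarrow> snd (ws ! i) \<noteq> \<one>\<^bsub>G\<^esub>) \<longrightarrow>
        enat (length (filter fst ws)) < n \<longrightarrow>
        enat (length (filter (\<lambda>w. \<not> fst w) ws)) < n \<longrightarrow>
        rf_word_prod G a ws \<noteq> \<one>\<^bsub>G\<^esub>)"

definition n_RF_pair :: "('a, 'b) monoid_scheme \<Rightarrow> 'a set \<Rightarrow> enat \<Rightarrow> bool" where
  "n_RF_pair G D n \<longleftrightarrow> (\<forall>a \<in> carrier G - D. n_RF_rel G D n a)"

text \<open>Internal amalgamated free product: the subgroup P of G is A *_C B, i.e. P is generated by
  A \<union> B, C \<subseteq> A \<inter> B, and the natural map A *_C B \<rightarrow> P is injective, i.e. every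
  alternating product of length \<ge> 2 of elements alternately from A - C and B - C is nontrivial.\<close>

definition is_internal_amalgam :: "('a, 'b) monoid_scheme \<Rightarrow> 'a set \<Rightarrow> 'a set \<Rightarrow> 'a set \<Rightarrow> 'a set \<Rightarrow> bool" where
  "is_internal_amalgam G P A B C \<longleftrightarrow>
     subgroup P G \<and> subgroup A G \<and> subgroup B G \<and> subgroup C G \<and>
     C \<subseteq> A \<and> C \<subseteq> B \<and> generate G (A \<union> B) = P \<and>
     (\<forall>xs (s::nat). 2 \<le> length xs \<longrightarrow>
        (\<forall>i < length xs. xs ! i \<in> (if even (i + s) then A - C else B - C)) \<longrightarrow>
        foldr (\<otimes>\<^bsub>G\<^esub>) xs \<one>\<^bsub>G\<^esub> \<noteq> \<one>\<^bsub>G\<^esub>)"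

end

theory Submission
  imports Defs
begin


definition prodl :: "('a,'b) monoid_scheme \<Rightarrow> 'a list \<Rightarrow> 'a" where
  "prodl G xs = foldr (\<otimes>\<^bsub>G\<^esub>) xs \<one>\<^bsub>G\<^esub>"

lemma prodl_Nil[simp]: "prodl G [] = \<one>\<^bsub>G\<^esub>" and prodl_Cons[simp]: "prodl G (x # xs) = x \<otimes>\<^bsub>G\<^esub> prodl G xs"
  by (simp_all add: prodl_def)

fun red :: "'a set \<Rightarrow> 'a set \<Rightarrow> 'a set \<Rightarrow> 'a list \<Rightarrow> bool" where
  "red A B C [] = True"
| "red A B C [x] = (x \<in> (A \<union> B) - C)"
| "red A B C (x # y # zs) = (x \<in> (A \<union> B) - C \<and> ((x \<in> A) \<noteq> (y \<in> A)) \<and> red A B C (y # zs))"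

lemma red_Cons: "red A B C (x # xs) \<longleftrightarrow> x \<in> (A \<union> B) - C \<and> red A B C xs \<and> (xs \<noteq> [] \<longrightarrow> (x \<in> A) \<noteq> (hd xs \<in> A))"
  by (cases xs) auto

context group begin

lemma prodl_closed[simp]: "set xs \<subseteq> carrier G \<Longrightarrow> prodl G xs \<in> carrier G"
  by (induction xs) auto

lemma prodl_append: "set xs \<subseteq> carrier G \<Longrightarrow> set ys \<subseteq> carrier G \<Longrightarrow> prodl G (xs @ ys) = prodl G xs \<otimes> prodl G ys"
  by (induction xs) (auto simp: m_assoc)

lemma prodl_rev_inv: "set xs \<subseteq> carrier G \<Longrightarrow> prodl G (rev (map (\<lambda>x. inv x) xs)) = inv (prodl G xs)"
proof (induction xs)
  case (Cons a xs)
  have "set (rev (map (\<lambda>x. inv x) xs)) \<subseteq> carrier G" using Cons.prems by auto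
  then show ?case using Cons by (simp add: prodl_append inv_mult_group)
qed simp

end

locale amal = group G for G (structure) +
  fixes A B C
  assumes sA: "subgroup A G" and sB: "subgroup B G" and sC: "subgroup C G"
    and CA: "C \<subseteq> A" and CB: "C \<subseteq> B" and AB: "A \<inter> B \<subseteq> C"
    and nontriv: "red A B C xs \<Longrightarrow> xs \<noteq> [] \<Longrightarrow> prodl G xs \<noteq> \<one>"
begin

lemma A_carr: "A \<subseteq> carrier G" using sA subgroup.subset by blast
lemma B_carr: "B \<subseteq> carrier G" using sB subgroup.subset by blast
lemma C_carr: "C \<subseteq> carrier G" using sC subgroup.subset by blast


lemma red_set: "red A B C xs \<Longrightarrow> set xs \<subseteq> (A \<union> B) - C"
  by (induction xs) (auto simp: red_Cons)

lemma red_carr: "red A B C xs \<Longrightarrow> set xs \<subseteq> carrier G"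
  using red_set A_carr B_carr by blast

lemma red_append: "red A B C (xs @ ys) \<longleftrightarrow> red A B C xs \<and> red A B C ys \<and> (xs \<noteq> [] \<longrightarrow> ys \<noteq> [] \<longrightarrow> (last xs \<in> A) \<noteq> (hd ys \<in> A))"
  by (induction xs) (auto simp: red_Cons)

lemma inv_in_iff: assumes "subgroup H G" "x \<in> carrier G" shows "inv x \<in> H \<longleftrightarrow> x \<in> H"
  by (metis assms inv_inv subgroup.m_inv_closed)

lemma red_rev_inv: "red A B C xs \<Longrightarrow> red A B C (rev (map (\<lambda>x. inv x) xs))"
proof (induction xs)
  case Nil then show ?case by simp
next
  case (Cons x xs)
  have xc: "x \<in> carrier G" using red_carr[OF Cons.prems] by auto
  have xs: "set xs \<subseteq> carrier G" using red_carr[OF Cons.prems] by auto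
  have 1: "red A B C (rev (map (\<lambda>x. inv x) xs))" using Cons by (simp add: red_Cons)
  have 2: "red A B C [inv x]" using Cons.prems xc inv_in_iff[OF sA] inv_in_iff[OF sB] inv_in_iff[OF sC]
    by (auto simp: red_Cons)
  have 3: "xs \<noteq> [] \<Longrightarrow> (last (rev (map (\<lambda>x. inv x) xs)) \<in> A) \<noteq> (inv x \<in> A)"
  proof -
    assume ne: "xs \<noteq> []"
    then have "hd xs \<in> carrier G" using xs by auto
    then show ?thesis using ne Cons.prems xc inv_in_iff[OF sA] by (auto simp: red_Cons last_rev hd_map)
  qed
  show ?case using 1 2 3 by (auto simp: red_append)
qed

lemma mem_B_iff: "x \<in> (A \<union> B) - C \<Longrightarrow> x \<in> B \<longleftrightarrow> x \<notin> A"
  using AB by auto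

lemma red_swap: "red B A C xs \<longleftrightarrow> red A B C xs"
proof (induction xs)
  case (Cons x xs)
  show ?case
  proof (cases xs)
    case (Cons y ys)
    have key: "x \<in> (A \<union> B) - C \<Longrightarrow> y \<in> (A \<union> B) - C \<Longrightarrow> ((x\<in>B)\<noteq>(y\<in>B)) = ((x\<in>A)\<noteq>(y\<in>A))"
      using AB by blast
    have e1: "red B A C (x # xs) = (x \<in> (A \<union> B) - C \<and> (x\<in>B)\<noteq>(y\<in>B) \<and> red B A C xs)"
      using Cons by (simp add: Un_commute)
    have e2: "red A B C (x # xs) = (x \<in> (A \<union> B) - C \<and> (x\<in>A)\<noteq>(y\<in>A) \<and> red A B C xs)"
      using Cons by simp
    have y1: "red A B C xs \<Longrightarrow> y \<in> (A \<union> B) - C" using Cons by (cases ys) auto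
    show ?thesis unfolding e1 e2 using Cons.IH key y1 by blast
  qed auto
qed simp

end


lemma amal_swap: "amal G A B C \<Longrightarrow> amal G B A C"
proof -
  assume a: "amal G A B C"
  interpret amal G A B C by (rule a)
  show ?thesis
  proof (intro amal.intro amal_axioms.intro)
    show "group G" by (rule group_axioms)
    fix xs assume "red B A C xs" "xs \<noteq> []"
    then show "prodl G xs \<noteq> \<one>\<^bsub>G\<^esub>" using nontriv red_swap by blast
  qed (use sA sB sC CA CB AB in auto)
qed

context amal begin

lemma red_nth: "red A B C xs \<Longrightarrow> Suc i < length xs \<Longrightarrow> (xs!i \<in> A) \<noteq> (xs!Suc i \<in> A)"
proof (induction xs arbitrary: i)
  case (Cons x xs)
  then show ?case by (cases i) (auto simp: red_Cons hd_conv_nth)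
qed simp

lemma red_odd: "red A B C xs \<Longrightarrow> xs \<noteq> [] \<Longrightarrow> ((hd xs \<in> A) = (last xs \<in> A)) = odd (length xs)"
proof (induction xs)
  case (Cons x xs)
  show ?case
  proof (cases xs)
    case (Cons y ys)
    have ih: "((hd xs \<in> A) = (last xs \<in> A)) = odd (length xs)"
      using Cons.IH Cons.prems Cons by (simp add: red_Cons)
    have d: "(x \<in> A) \<noteq> (hd xs \<in> A)" using Cons.prems Cons by (simp add: red_Cons)
    have "last (x # xs) = last xs" using Cons by simp
    then show ?thesis using ih d by auto
  qed simp
qed simp

lemma red_nonC: "red A B C xs \<Longrightarrow> xs \<noteq> [] \<Longrightarrow> prodl G xs \<notin> C"
proof
  assume r: "red A B C xs" and ne: "xs \<noteq> []" and c: "prodl G xs \<in> C"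
  show False
  proof (cases "length xs = 1")
    case True
    then obtain x where "xs = [x]" by (cases xs) auto
    then show False using r c C_carr A_carr B_carr by auto
  next
    case False
    then obtain x ys where xs: "xs = ys @ [x]" using ne by (metis rev_exhaust)
    have ys: "ys \<noteq> []" using False xs by auto
    have xc: "x \<in> carrier G" and ysc: "set ys \<subseteq> carrier G" using red_carr[OF r] xs by auto
    let ?c = "prodl G xs"
    have cc: "?c \<in> carrier G" using c C_carr by auto
    have ra: "red A B C ys" "x \<in> (A \<union> B) - C" and tl: "(last ys \<in> A) \<noteq> (x \<in> A)"
      using r ys unfolding xs red_append by auto
    have x'mem: "x \<otimes> inv ?c \<in> (A \<union> B) - C"
    proof -
      have "x \<otimes> inv ?c \<notin> C"
      proof
        assume "x \<otimes> inv ?c \<in> C"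
        then have "x \<otimes> inv ?c \<otimes> ?c \<in> C" using c subgroup.m_closed[OF sC] by blast
        then show False using ra xc cc by (simp add: m_assoc)
      qed
      moreover have "x \<otimes> inv ?c \<in> A \<or> x \<otimes> inv ?c \<in> B"
      proof -
        have ic: "inv ?c \<in> C" using c subgroup.m_inv_closed[OF sC] by blast
        then have "inv ?c \<in> A" "inv ?c \<in> B" using CA CB by auto
        then show ?thesis using ra(2) subgroup.m_closed[OF sA] subgroup.m_closed[OF sB] by blast
      qed
      ultimately show ?thesis by auto
    qed
    have same: "(x \<otimes> inv ?c \<in> A) = (x \<in> A)"
    proof
      have ic: "inv ?c \<in> A" "?c \<in> A" using c subgroup.m_inv_closed[OF sC] CA by blast+
      show "x \<otimes> inv ?c \<in> A \<Longrightarrow> x \<in> A"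
      proof -
        assume "x \<otimes> inv ?c \<in> A"
        then have "x \<otimes> inv ?c \<otimes> ?c \<in> A" using ic subgroup.m_closed[OF sA] by blast
        then show ?thesis using xc cc by (simp add: m_assoc)
      qed
      show "x \<in> A \<Longrightarrow> x \<otimes> inv ?c \<in> A" using ic subgroup.m_closed[OF sA] by blast
    qed
    have "red A B C (ys @ [x \<otimes> inv ?c])"
      unfolding red_append using ra x'mem tl same ys by simp
    moreover have "prodl G (ys @ [x \<otimes> inv ?c]) = \<one>"
    proof -
      have "prodl G (ys @ [x \<otimes> inv ?c]) = prodl G ys \<otimes> (x \<otimes> inv ?c)"
        using ysc xc cc by (simp add: prodl_append)
      also have "\<dots> = (prodl G ys \<otimes> x) \<otimes> inv ?c" using ysc xc cc by (simp add: m_assoc)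
      also have "prodl G ys \<otimes> x = ?c" using ysc xc unfolding xs by (simp add: prodl_append)
      finally show ?thesis using cc by simp
    qed
    ultimately show False using nontriv[of "ys @ [x \<otimes> inv ?c]"] by simp
  qed
qed

lemma red_ne1: "red A B C xs \<Longrightarrow> xs \<noteq> [] \<Longrightarrow> prodl G xs \<noteq> \<one>"
  using nontriv by blast

end


definition nf :: "('a,'b) monoid_scheme \<Rightarrow> 'a set \<Rightarrow> 'a set \<Rightarrow> 'a set \<Rightarrow> 'a \<Rightarrow> bool" where
  "nf G A B C g \<longleftrightarrow> g \<in> C \<or> (\<exists>xs. red A B C xs \<and> xs \<noteq> [] \<and> g = prodl G xs)"

context amal begin

lemma nf_swap: "nf G B A C g = nf G A B C g"
  unfolding nf_def using red_swap by simp

lemma mA: "x \<in> A \<Longrightarrow> y \<in> A \<Longrightarrow> x \<otimes> y \<in> A" using subgroup.m_closed[OF sA] by blast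
lemma mB: "x \<in> B \<Longrightarrow> y \<in> B \<Longrightarrow> x \<otimes> y \<in> B" using subgroup.m_closed[OF sB] by blast
lemma mC: "x \<in> C \<Longrightarrow> y \<in> C \<Longrightarrow> x \<otimes> y \<in> C" using subgroup.m_closed[OF sC] by blast
lemma iA: "x \<in> A \<Longrightarrow> inv x \<in> A" using subgroup.m_inv_closed[OF sA] by blast
lemma iB: "x \<in> B \<Longrightarrow> inv x \<in> B" using subgroup.m_inv_closed[OF sB] by blast
lemma iC: "x \<in> C \<Longrightarrow> inv x \<in> C" using subgroup.m_inv_closed[OF sC] by blast
lemma oneC: "\<one> \<in> C" using subgroup.one_closed[OF sC] by blast

lemma left_cancel_C: assumes "c \<in> C" "y \<in> carrier G" "c \<otimes> y \<in> C" shows "y \<in> C"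
proof -
  have "inv c \<otimes> (c \<otimes> y) \<in> C" using assms iC mC by blast
  moreover have "inv c \<otimes> (c \<otimes> y) = y" using assms C_carr by (auto simp: m_assoc[symmetric])
  ultimately show ?thesis by simp
qed

lemma right_cancel_C: assumes "c \<in> C" "y \<in> carrier G" "y \<otimes> c \<in> C" shows "y \<in> C"
proof -
  have "(y \<otimes> c) \<otimes> inv c \<in> C" using assms iC mC by blast
  moreover have "(y \<otimes> c) \<otimes> inv c = y" using assms C_carr by (auto simp: m_assoc)
  ultimately show ?thesis by simp
qed

lemma nf_mult_A: assumes x: "x \<in> A" and g: "nf G A B C g" shows "nf G A B C (x \<otimes> g)"
proof -
  have xc: "x \<in> carrier G" using x A_carr by auto
  consider "g \<in> C" | xs where "red A B C xs" "xs \<noteq> []" "g = prodl G xs" using g unfolding nf_def by blast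
  then show ?thesis
  proof cases
    case 1
    then have "x \<otimes> g \<in> A" using x CA mA by blast
    show ?thesis
    proof (cases "x \<otimes> g \<in> C")
      case False
      then have "red A B C [x \<otimes> g]" using \<open>x \<otimes> g \<in> A\<close> by simp
      then show ?thesis unfolding nf_def using 1 C_carr by (intro disjI2 exI[of _ "[x \<otimes> g]"]) (use 1 C_carr A_carr x \<open>x \<otimes> g \<in> A\<close> in auto)
    qed (simp add: nf_def)
  next
    case 2
    then obtain y ys where xs: "xs = y # ys" by (cases xs) auto
    have r: "red A B C (y # ys)" using 2 xs by simp
    have y: "y \<in> (A \<union> B) - C" and rys: "red A B C ys" and alt: "ys \<noteq> [] \<Longrightarrow> (y \<in> A) \<noteq> (hd ys \<in> A)"
      using r by (auto simp: red_Cons)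
    have yc: "y \<in> carrier G" using y A_carr B_carr by auto
    have ysc: "set ys \<subseteq> carrier G" using red_carr[OF rys] .
    have geq: "x \<otimes> g = (x \<otimes> y) \<otimes> prodl G ys" using 2 xs xc yc ysc by (simp add: m_assoc)
    show ?thesis
    proof (cases "y \<in> A")
      case False
      then have yB: "y \<in> B - C" using y by auto
      show ?thesis
      proof (cases "x \<in> C")
        case True
        have "x \<otimes> y \<in> B" using True CB yB mB by blast
        moreover have "x \<otimes> y \<notin> C" using left_cancel_C[OF True yc] yB by blast
        ultimately have n: "x \<otimes> y \<notin> A" using AB by blast
        have "red A B C ((x \<otimes> y) # ys)"
          using rys alt n False \<open>x \<otimes> y \<in> B\<close> \<open>x \<otimes> y \<notin> C\<close> by (auto simp: red_Cons)
        then show ?thesis unfolding nf_def geq by (intro disjI2 exI[of _ "(x \<otimes> y) # ys"]) simp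
      next
        case xnC: False
        have "red A B C (x # y # ys)" using r x xnC False by simp
        moreover have "x \<otimes> g = prodl G (x # y # ys)" using 2 xs by simp
        ultimately show ?thesis unfolding nf_def by blast
      qed
    next
      case yA: True
      have zA: "x \<otimes> y \<in> A" using x yA mA by blast
      show ?thesis
      proof (cases "x \<otimes> y \<in> C")
        case False
        have "red A B C ((x \<otimes> y) # ys)" using rys alt zA yA False by (auto simp: red_Cons)
        then show ?thesis unfolding nf_def geq by (intro disjI2 exI[of _ "(x \<otimes> y) # ys"]) simp
      next
        case zC: True
        show ?thesis
        proof (cases ys)
          case Nil
          then show ?thesis using zC geq xc yc unfolding nf_def by simp
        next
          case (Cons w ws)
          have w: "w \<in> (A \<union> B) - C" "w \<notin> A" and rws: "red A B C ws"
            and alt2: "ws \<noteq> [] \<Longrightarrow> (w \<in> A) \<noteq> (hd ws \<in> A)"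
            using rys alt yA Cons by (auto simp: red_Cons)
          have wc: "w \<in> carrier G" using w A_carr B_carr by auto
          have wsc: "set ws \<subseteq> carrier G" using red_carr[OF rws] .
          have wB: "w \<in> B" using w by auto
          have zwB: "x \<otimes> y \<otimes> w \<in> B" using zC CB wB mB by blast
          have zwnC: "x \<otimes> y \<otimes> w \<notin> C" using left_cancel_C[OF zC wc] w by blast
          have zwnA: "x \<otimes> y \<otimes> w \<notin> A" using zwB zwnC AB by blast
          have "red A B C ((x \<otimes> y \<otimes> w) # ws)" using rws alt2 w zwB zwnC zwnA by (auto simp: red_Cons)
          moreover have "x \<otimes> g = prodl G ((x \<otimes> y \<otimes> w) # ws)"
            using geq Cons xc yc wc wsc by (simp add: m_assoc)
          ultimately show ?thesis unfolding nf_def by blast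
        qed
      qed
    qed
  qed
qed

end

lemma nf_mult_B: "amal G A B C \<Longrightarrow> x \<in> B \<Longrightarrow> nf G A B C g \<Longrightarrow> nf G A B C (x \<otimes>\<^bsub>G\<^esub> g)"
  using amal.nf_mult_A[OF amal_swap] amal.nf_swap by metis

context amal begin

lemma nf_carr: "nf G A B C g \<Longrightarrow> g \<in> carrier G"
  unfolding nf_def using C_carr red_carr prodl_closed by blast

lemma nf_mult_AB: "x \<in> A \<union> B \<Longrightarrow> nf G A B C g \<Longrightarrow> nf G A B C (x \<otimes> g)"
  using nf_mult_A nf_mult_B[OF amal_axioms] by blast

lemma nf_mult: assumes "nf G A B C g" "nf G A B C h" shows "nf G A B C (g \<otimes> h)"
proof -
  have hc: "h \<in> carrier G" using assms nf_carr by blast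
  have *: "red A B C xs \<Longrightarrow> nf G A B C (prodl G xs \<otimes> h)" for xs
  proof (induction xs)
    case Nil then show ?case using assms hc by simp
  next
    case (Cons x xs)
    have x: "x \<in> A \<union> B" and r: "red A B C xs" using Cons.prems by (auto simp: red_Cons)
    have "x \<in> carrier G" using x A_carr B_carr by auto
    note x = x this
    have "nf G A B C (x \<otimes> (prodl G xs \<otimes> h))" using nf_mult_AB[OF x(1)] Cons.IH[OF r] by blast
    then show ?case using x red_carr[OF r] hc by (simp add: m_assoc)
  qed
  show ?thesis
  proof (cases "g \<in> C")
    case True
    then show ?thesis using nf_mult_AB[of g h] assms CA by blast
  next
    case False
    then show ?thesis using assms(1) * unfolding nf_def by blast
  qed
qed

lemma nf_inv: assumes "nf G A B C g" shows "nf G A B C (inv g)"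
proof (cases "g \<in> C")
  case True then show ?thesis unfolding nf_def using iC by blast
next
  case False
  then obtain xs where xs: "red A B C xs" "xs \<noteq> []" "g = prodl G xs" using assms unfolding nf_def by blast
  then show ?thesis unfolding nf_def using red_rev_inv[OF xs(1)] prodl_rev_inv[OF red_carr[OF xs(1)]]
    by (intro disjI2 exI[of _ "rev (map (\<lambda>x. inv x) xs)"]) auto
qed

lemma nf_gen: "g \<in> generate G (A \<union> B) \<Longrightarrow> nf G A B C g"
proof (induction rule: generate.induct)
  case one then show ?case unfolding nf_def using oneC by blast
next
  case (incl h)
  have "nf G A B C \<one>" unfolding nf_def using oneC by blast
  then have "nf G A B C (h \<otimes> \<one>)" using nf_mult_AB incl by blast
  then show ?case using incl A_carr B_carr by auto
next
  case (inv h)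
  have "nf G A B C \<one>" unfolding nf_def using oneC by blast
  then have "nf G A B C (h \<otimes> \<one>)" using nf_mult_AB inv by blast
  then have "nf G A B C h" using inv A_carr B_carr by auto
  then show ?case using nf_inv by blast
next
  case (eng h1 h2) then show ?case using nf_mult by blast
qed

end


lemma red_nth_gen: "red A B C xs \<Longrightarrow> Suc i < length xs \<Longrightarrow> (xs!i \<in> A) \<noteq> (xs!Suc i \<in> A)"
proof (induction xs arbitrary: i)
  case (Cons x xs)
  then show ?case by (cases i) (auto simp: red_Cons hd_conv_nth)
qed simp

lemma red_set_gen: "red A B C xs \<Longrightarrow> set xs \<subseteq> (A \<union> B) - C"
  by (induction xs) (auto simp: red_Cons)

context group begin

lemma amal_of_internal:
  assumes I: "is_internal_amalgam G P A B C"
  shows "amal G A B C"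
proof -
  note G = group_axioms
  have sA: "subgroup A G" and sB: "subgroup B G" and sC: "subgroup C G" and CA: "C \<subseteq> A" and CB: "C \<subseteq> B"
    and N: "\<And>xs s. 2 \<le> length xs \<Longrightarrow> (\<forall>i < length xs. xs ! i \<in> (if even (i + s) then A - C else B - C)) \<Longrightarrow>
        foldr (\<otimes>) xs \<one> \<noteq> \<one>"
    using I unfolding is_internal_amalgam_def by blast+
  have AB: "A \<inter> B \<subseteq> C"
  proof
    fix x assume x: "x \<in> A \<inter> B"
    show "x \<in> C"
    proof (rule ccontr)
      assume nC: "x \<notin> C"
      have xc: "x \<in> carrier G" using x sA subgroup.subset by blast
      have "inv x \<in> B" using x subgroup.m_inv_closed[OF sB] by blast
      moreover have "inv x \<notin> C" using nC subgroup.m_inv_closed[OF sC] xc by (metis inv_inv)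
      ultimately have "\<forall>i < length [x, inv x]. [x, inv x] ! i \<in> (if even (i + 0) then A - C else B - C)"
        using x nC by (auto simp: less_Suc_eq)
      then have "foldr (\<otimes>) [x, inv x] \<one> \<noteq> \<one>" using N[of "[x, inv x]" 0] by simp
      then show False using xc by simp
    qed
  qed
  show ?thesis
  proof (intro amal.intro amal_axioms.intro G sA sB sC CA CB AB)
    fix xs assume r: "red A B C xs" and ne: "xs \<noteq> []"
    have st: "set xs \<subseteq> (A \<union> B) - C" using red_set_gen[OF r] .
    show "prodl G xs \<noteq> \<one>"
    proof (cases "length xs = 1")
      case True
      then obtain x where "xs = [x]" by (cases xs) auto
      moreover have "\<one> \<in> C" using subgroup.one_closed[OF sC] .
      moreover have "x \<in> carrier G" using st \<open>xs = [x]\<close> sA sB subgroup.subset by auto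
      ultimately show ?thesis using st by auto
    next
      case False
      define s where "s = (if hd xs \<in> A then 0 else 1::nat)"
      have claim: "i < length xs \<Longrightarrow> xs ! i \<in> (if even (i + s) then A - C else B - C)" for i
      proof (induction i)
        case 0
        have "xs ! 0 \<in> (A \<union> B) - C" using st ne by (simp add: subset_iff)
        then show ?case using ne unfolding s_def by (auto simp: hd_conv_nth)
      next
        case (Suc i)
        have prev: "xs ! i \<in> (if even (i + s) then A - C else B - C)" using Suc by simp
        have alt: "(xs!i \<in> A) \<noteq> (xs!Suc i \<in> A)" using red_nth_gen[OF r Suc.prems] .
        have cur: "xs ! Suc i \<in> (A \<union> B) - C" using st Suc.prems by (simp add: subset_iff)
        show ?case
        proof (cases "even (i + s)")
          case True
          then have "xs ! Suc i \<notin> A" using prev alt by auto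
          then show ?thesis using True cur by auto
        next
          case False
          then have "xs ! i \<in> B - C" using prev by simp
          then have "xs ! i \<notin> A" using AB by blast
          then have "xs ! Suc i \<in> A" using alt by auto
          then show ?thesis using False cur by auto
        qed
      qed
      have "length xs \<noteq> 0" using ne by simp
      then have "2 \<le> length xs" using False by linarith
      then show ?thesis using N[of xs s] claim unfolding prodl_def by blast
    qed
  qed
qed

end

lemma mem_flip: "A \<inter> B \<subseteq> C \<Longrightarrow> x \<in> (A \<union> B) - C \<Longrightarrow> y \<in> (A \<union> B) - C \<Longrightarrow> (x \<in> B \<longleftrightarrow> y \<in> B) \<Longrightarrow> (x \<in> A \<longleftrightarrow> y \<in> A)"
  by blast

context group begin

lemma cascade:
  assumes "amal G A B C" "length u = length v" "red A B C u" "red A B C v"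
    "u \<noteq> [] \<Longrightarrow> last u \<notin> A \<and> hd v \<notin> A" "z \<in> A"
  shows "prodl G u \<otimes> z \<otimes> prodl G v \<in> C \<or>
    (\<exists>ys. red A B C ys \<and> ys \<noteq> [] \<and> prodl G u \<otimes> z \<otimes> prodl G v = prodl G ys \<and>
       (hd ys \<in> A \<longleftrightarrow> hd (u @ [z]) \<in> A) \<and> (last ys \<in> A \<longleftrightarrow> last (z # v) \<in> A))"
  using assms
proof (induction "length u" arbitrary: u v z A B)
  case 0
  interpret amal G A B C by (rule 0)
  have zc: "z \<in> carrier G" using 0 A_carr by auto
  show ?case
  proof (cases "z \<in> C")
    case False
    then have "red A B C [z]" using 0 by simp
    then show ?thesis using 0 zc by (intro disjI2 exI[of _ "[z]"]) auto
  qed (use 0 zc in auto)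
next
  case (Suc t)
  interpret amal G A B C by (rule Suc.prems(1))
  have une: "u \<noteq> []" using Suc.hyps by auto
  then have vne: "v \<noteq> []" using Suc.prems by auto
  obtain u' a where u: "u = u' @ [a]" using une by (metis rev_exhaust)
  obtain b v' where v: "v = b # v'" using vne by (cases v) auto
  have ab: "a \<notin> A" "b \<notin> A" using Suc.prems(5) une u v by auto
  have ru: "red A B C u'" "a \<in> (A \<union> B) - C" and altu: "u' \<noteq> [] \<Longrightarrow> (last u' \<in> A) \<noteq> (a \<in> A)"
    using Suc.prems(3) unfolding u red_append by auto
  have rv: "red A B C v'" "b \<in> (A \<union> B) - C" and altv: "v' \<noteq> [] \<Longrightarrow> (b \<in> A) \<noteq> (hd v' \<in> A)"
    using Suc.prems(4) unfolding v by (auto simp: red_Cons)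
  have aB: "a \<in> B" "b \<in> B" using ab ru rv by auto
  have ac: "a \<in> carrier G" "b \<in> carrier G" using aB B_carr by auto
  have zc: "z \<in> carrier G" using Suc.prems A_carr by auto
  have u'c: "set u' \<subseteq> carrier G" using red_carr[OF ru(1)] .
  have v'c: "set v' \<subseteq> carrier G" using red_carr[OF rv(1)] .
  show ?case
  proof (cases "z \<in> C")
    case False
    let ?ys = "u @ [z] @ v"
    have "red A B C ?ys" unfolding red_append using Suc.prems False ab u v by (auto simp: red_Cons)
    moreover have "prodl G ?ys = prodl G u \<otimes> z \<otimes> prodl G v"
      using red_carr[OF Suc.prems(3)] red_carr[OF Suc.prems(4)] zc by (simp add: prodl_append m_assoc)
    moreover have "hd ?ys = hd (u @ [z])" "last ?ys = last (z # v)" using une vne by auto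
    ultimately show ?thesis by (intro disjI2 exI[of _ ?ys]) (use une in auto)
  next
    case True
    define z' where "z' = a \<otimes> z \<otimes> b"
    have z'B: "z' \<in> B" unfolding z'_def using aB True CB mB by blast
    have z'c: "z' \<in> carrier G" using z'B B_carr by auto
    have eq: "prodl G u \<otimes> z \<otimes> prodl G v = prodl G u' \<otimes> z' \<otimes> prodl G v'"
      unfolding u v z'_def using u'c v'c ac zc by (simp add: prodl_append m_assoc)
    have am: "amal G B A C" using amal_swap[OF Suc.prems(1)] .
    have lu: "u' \<noteq> [] \<Longrightarrow> last u' \<in> (A \<union> B) - C" using ru(1) red_set last_in_set by blast
    have hv: "v' \<noteq> [] \<Longrightarrow> hd v' \<in> (A \<union> B) - C" using rv(1) red_set hd_in_set by blast
    have c5: "u' \<noteq> [] \<Longrightarrow> last u' \<notin> B \<and> hd v' \<notin> B"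
    proof -
      assume ne: "u' \<noteq> []"
      then have ne2: "v' \<noteq> []" using Suc.prems(2) u v by auto
      have "last u' \<in> A" using altu[OF ne] ab by auto
      moreover have "hd v' \<in> A" using altv[OF ne2] ab by auto
      ultimately show ?thesis using lu[OF ne] hv[OF ne2] AB by blast
    qed
    have IH: "prodl G u' \<otimes> z' \<otimes> prodl G v' \<in> C \<or>
      (\<exists>ys. red B A C ys \<and> ys \<noteq> [] \<and> prodl G u' \<otimes> z' \<otimes> prodl G v' = prodl G ys \<and>
       (hd ys \<in> B \<longleftrightarrow> hd (u' @ [z']) \<in> B) \<and> (last ys \<in> B \<longleftrightarrow> last (z' # v') \<in> B))"
      using Suc.hyps(1)[of u' B A v' z'] Suc.hyps(2) u Suc.prems(2) am ru(1) rv(1) red_swap c5 z'B v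
      by simp
    show ?thesis
    proof (cases "prodl G u' \<otimes> z' \<otimes> prodl G v' \<in> C")
      case True then show ?thesis using eq by simp
    next
      case False
      then obtain ys where ys: "red B A C ys" "ys \<noteq> []" "prodl G u' \<otimes> z' \<otimes> prodl G v' = prodl G ys"
        "hd ys \<in> B \<longleftrightarrow> hd (u' @ [z']) \<in> B" "last ys \<in> B \<longleftrightarrow> last (z' # v') \<in> B" using IH by blast
      have rys: "red A B C ys" using ys(1) red_swap by simp
      have hys: "hd ys \<in> (A \<union> B) - C" "last ys \<in> (A \<union> B) - C"
        using red_set[OF rys] ys(2) hd_in_set last_in_set by blast+
      have h: "hd ys \<in> A \<longleftrightarrow> hd (u @ [z]) \<in> A"
      proof (cases "u' = []")
        case True
        then have "hd ys \<in> B" using ys(4) z'B by simp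
        then have "hd ys \<notin> A" using hys AB by blast
        then show ?thesis using True u ab by simp
      next
        case False
        then have "hd (u @ [z]) = hd u'" "hd (u' @ [z']) = hd u'" using u by auto
        moreover have "hd u' \<in> (A \<union> B) - C" using False red_set[OF ru(1)] hd_in_set by blast
        ultimately show ?thesis using ys(4) hys mem_flip[OF AB] by metis
      qed
      have l: "last ys \<in> A \<longleftrightarrow> last (z # v) \<in> A"
      proof (cases "v' = []")
        case True
        then have "last ys \<in> B" using ys(5) z'B by simp
        then have "last ys \<notin> A" using hys AB by blast
        then show ?thesis using True v ab by simp
      next
        case False
        then have "last (z # v) = last v'" "last (z' # v') = last v'" using v by auto
        moreover have "last v' \<in> (A \<union> B) - C" using False red_set[OF rv(1)] last_in_set by blast
        ultimately show ?thesis using ys(5) hys mem_flip[OF AB] by metis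
      qed
      show ?thesis using rys ys(2,3) h l eq by auto
    qed
  qed
qed

end



definition sg :: "('a,'b) monoid_scheme \<Rightarrow> 'a \<Rightarrow> bool \<Rightarrow> 'a" where
  "sg G a e = (if e then a else inv\<^bsub>G\<^esub> a)"

definition cyc :: "('a,'b) monoid_scheme \<Rightarrow> (bool \<times> 'a) list \<Rightarrow> bool" where
  "cyc G ws \<longleftrightarrow> (\<forall>i < length ws. fst (ws ! i) \<noteq> fst (ws ! ((i + 1) mod length ws)) \<longrightarrow> snd (ws ! i) \<noteq> \<one>\<^bsub>G\<^esub>)"

definition chain :: "('a,'b) monoid_scheme \<Rightarrow> (bool \<times> 'a) list \<Rightarrow> bool" where
  "chain G ws \<longleftrightarrow> (\<forall>i. Suc i < length ws \<longrightarrow> fst (ws ! i) \<noteq> fst (ws ! Suc i) \<longrightarrow> snd (ws ! i) \<noteq> \<one>\<^bsub>G\<^esub>)"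

definition wprod :: "('a,'b) monoid_scheme \<Rightarrow> 'a \<Rightarrow> (bool \<times> 'a) list \<Rightarrow> 'a" where
  "wprod G a ws = prodl G (map (\<lambda>(e,d). sg G a e \<otimes>\<^bsub>G\<^esub> d) ws)"

lemma wprod_Nil[simp]: "wprod G a [] = \<one>\<^bsub>G\<^esub>" by (simp add: wprod_def)
lemma wprod_Cons[simp]: "wprod G a ((e,d) # ws) = (sg G a e \<otimes>\<^bsub>G\<^esub> d) \<otimes>\<^bsub>G\<^esub> wprod G a ws"
  by (simp add: wprod_def)

lemma rf_wprod: "rf_word_prod G a ws = wprod G a ws"
  by (induction ws) (auto simp: rf_word_prod_def wprod_def sg_def)

context group begin

lemma sg_closed[simp]: "a \<in> carrier G \<Longrightarrow> sg G a e \<in> carrier G" by (simp add: sg_def)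

lemma wprod_closed[simp]: "a \<in> carrier G \<Longrightarrow> snd ` set ws \<subseteq> carrier G \<Longrightarrow> wprod G a ws \<in> carrier G"
  by (induction ws) auto

lemma wprod_append: "a \<in> carrier G \<Longrightarrow> snd ` set xs \<subseteq> carrier G \<Longrightarrow> snd ` set ys \<subseteq> carrier G \<Longrightarrow>
   wprod G a (xs @ ys) = wprod G a xs \<otimes> wprod G a ys"
  by (induction xs) (auto simp: m_assoc)

lemma rf_sub: assumes "subgroup S G" "a \<in> S" shows "rf_word_prod (G\<lparr>carrier := S\<rparr>) a ws = wprod G a ws"
  using assms by (induction ws) (auto simp: rf_word_prod_def wprod_def sg_def)

lemma nrf_sub: assumes "subgroup S G"
  shows "n_RF_rel (G\<lparr>carrier := S\<rparr>) D n a \<longleftrightarrow> a \<in> S - D \<and>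
     (\<forall>ws. ws \<noteq> [] \<longrightarrow> snd ` set ws \<subseteq> D \<longrightarrow> cyc G ws \<longrightarrow>
        enat (length (filter fst ws)) < n \<longrightarrow> enat (length (filter (\<lambda>w. \<not> fst w) ws)) < n \<longrightarrow>
        wprod G a ws \<noteq> \<one>)"
  using rf_sub[OF assms] unfolding n_RF_rel_def cyc_def by auto

lemma nrf_G: "n_RF_rel G D n a \<longleftrightarrow> a \<in> carrier G - D \<and>
     (\<forall>ws. ws \<noteq> [] \<longrightarrow> snd ` set ws \<subseteq> D \<longrightarrow> cyc G ws \<longrightarrow>
        enat (length (filter fst ws)) < n \<longrightarrow> enat (length (filter (\<lambda>w. \<not> fst w) ws)) < n \<longrightarrow>
        wprod G a ws \<noteq> \<one>)"
  unfolding n_RF_rel_def cyc_def rf_wprod by auto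

end

lemma cyc_chain: "cyc G ws \<Longrightarrow> chain G ws"
  unfolding cyc_def chain_def by (metis Suc_eq_plus1 Suc_lessD mod_less)

lemma chain_cyc: assumes "chain G ws" "ws \<noteq> []" "fst (last ws) \<noteq> fst (hd ws) \<Longrightarrow> snd (last ws) \<noteq> \<one>\<^bsub>G\<^esub>"
  shows "cyc G ws"
  unfolding cyc_def
proof (intro allI impI)
  fix i assume i: "i < length ws" and d: "fst (ws ! i) \<noteq> fst (ws ! ((i + 1) mod length ws))"
  show "snd (ws ! i) \<noteq> \<one>\<^bsub>G\<^esub>"
  proof (cases "Suc i < length ws")
    case True
    then show ?thesis using assms(1) d unfolding chain_def by simp
  next
    case False
    then have "Suc i = length ws" using i by simp
    then have "i = length ws - 1" "(i + 1) mod length ws = 0" by auto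
    then show ?thesis using assms d by (simp add: last_conv_nth hd_conv_nth)
  qed
qed

lemma chain_append1: "chain G (xs @ ys) \<Longrightarrow> chain G xs"
  unfolding chain_def by (metis (no_types, lifting) Suc_lessD length_append nth_append trans_less_add1)

lemma chain_append2: "chain G (xs @ ys) \<Longrightarrow> chain G ys"
  unfolding chain_def
proof (intro allI impI)
  fix i assume c: "\<forall>i. Suc i < length (xs @ ys) \<longrightarrow> fst ((xs @ ys) ! i) \<noteq> fst ((xs @ ys) ! Suc i) \<longrightarrow> snd ((xs @ ys) ! i) \<noteq> \<one>\<^bsub>G\<^esub>"
    and i: "Suc i < length ys" and d: "fst (ys ! i) \<noteq> fst (ys ! Suc i)"
  have "Suc (length xs + i) < length (xs @ ys)" using i by simp
  moreover have "(xs @ ys) ! (length xs + i) = ys ! i" "(xs @ ys) ! Suc (length xs + i) = ys ! Suc i"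
    by (simp_all add: nth_append)
  ultimately show "snd (ys ! i) \<noteq> \<one>\<^bsub>G\<^esub>" using c d by metis
qed

lemma chain_Cons: "chain G (x # xs) \<Longrightarrow> chain G xs"
  using chain_append2[of G "[x]" xs] by simp

lemma chain_lastfree: "chain G (xs @ [(e, x)]) \<Longrightarrow> chain G (xs @ [(e, x')])"
  unfolding chain_def
proof (intro allI impI)
  fix i assume c: "\<forall>i. Suc i < length (xs @ [(e, x)]) \<longrightarrow> fst ((xs @ [(e, x)]) ! i) \<noteq> fst ((xs @ [(e, x)]) ! Suc i) \<longrightarrow> snd ((xs @ [(e, x)]) ! i) \<noteq> \<one>\<^bsub>G\<^esub>"
    and i: "Suc i < length (xs @ [(e, x')])" and d: "fst ((xs @ [(e, x')]) ! i) \<noteq> fst ((xs @ [(e, x')]) ! Suc i)"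
  have il: "i < length xs" using i by simp
  have "j \<le> length xs \<Longrightarrow> fst ((xs @ [(e, x')]) ! j) = fst ((xs @ [(e, x)]) ! j)" for j
    by (cases "j < length xs") (auto simp: nth_append)
  moreover have "snd ((xs @ [(e, x')]) ! i) = snd ((xs @ [(e, x)]) ! i)" using il by (simp add: nth_append)
  ultimately show "snd ((xs @ [(e, x')]) ! i) \<noteq> \<one>\<^bsub>G\<^esub>" using c d i il
    by (metis Suc_leI less_imp_le length_append_singleton)
qed

lemma chain_prefix: "chain G (xs @ (e, y) # ys) \<Longrightarrow> chain G (xs @ [(e, y')])"
  using chain_append1[of G "xs @ [(e,y)]" ys] chain_lastfree by fastforce

lemma chain_head: "chain G ((e1, c1) # x # xs) \<Longrightarrow> fst x \<noteq> e1 \<Longrightarrow> c1 \<noteq> \<one>\<^bsub>G\<^esub>"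
  unfolding chain_def by (metis Suc_less_eq fst_conv length_Cons nth_Cons_0 nth_Cons_Suc snd_conv zero_less_Suc)

lemma cyc_rotate: assumes "cyc G ws" shows "cyc G (rotate r ws)"
  unfolding cyc_def
proof (intro allI impI)
  fix i assume i: "i < length (rotate r ws)" and d: "fst (rotate r ws ! i) \<noteq> fst (rotate r ws ! ((i + 1) mod length (rotate r ws)))"
  let ?k = "length ws"
  have k: "0 < ?k" using i by (cases ws) auto
  have e1: "rotate r ws ! i = ws ! ((r + i) mod ?k)" using i by (simp add: nth_rotate)
  have "(i + 1) mod ?k < length ws" using k by simp
  then have e2: "rotate r ws ! ((i + 1) mod ?k) = ws ! ((r + (i + 1) mod ?k) mod ?k)" by (simp add: nth_rotate)
  have "(r + (i + 1) mod ?k) mod ?k = ((r + i) mod ?k + 1) mod ?k" by (simp add: mod_simps)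
  then have "fst (ws ! ((r + i) mod ?k)) \<noteq> fst (ws ! (((r + i) mod ?k + 1) mod ?k))" using d e1 e2 by simp
  moreover have "(r + i) mod ?k < ?k" using k by simp
  ultimately have "snd (ws ! ((r + i) mod ?k)) \<noteq> \<one>\<^bsub>G\<^esub>" using assms unfolding cyc_def by blast
  then show "snd (rotate r ws ! i) \<noteq> \<one>\<^bsub>G\<^esub>" using e1 by simp
qed

lemma filter_rotate_len: "length (filter P (rotate r xs)) = length (filter P xs)"
proof -
  have "length (filter P xs) = length (filter P (take (r mod length xs) xs)) + length (filter P (drop (r mod length xs) xs))"
    by (metis append_take_drop_id filter_append length_append)
  then show ?thesis by (simp add: rotate_drop_take)
qed

context group begin

lemma prodl_rotate_one: assumes "set xs \<subseteq> carrier G" shows "prodl G (rotate r xs) = \<one> \<longleftrightarrow> prodl G xs = \<one>"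
proof -
  let ?m = "r mod length xs"
  have c1: "prodl G (take ?m xs) \<in> carrier G" "prodl G (drop ?m xs) \<in> carrier G"
    using assms by (auto intro!: prodl_closed dest: in_set_takeD in_set_dropD)
  have "prodl G xs = prodl G (take ?m xs) \<otimes> prodl G (drop ?m xs)"
    using assms prodl_append[of "take ?m xs" "drop ?m xs"] by (auto dest: in_set_takeD in_set_dropD)
  moreover have "prodl G (rotate r xs) = prodl G (drop ?m xs) \<otimes> prodl G (take ?m xs)"
    using assms prodl_append[of "drop ?m xs" "take ?m xs"] by (auto simp: rotate_drop_take dest: in_set_takeD in_set_dropD)
  moreover have "\<And>x y. x \<in> carrier G \<Longrightarrow> y \<in> carrier G \<Longrightarrow> x \<otimes> y = \<one> \<longleftrightarrow> y \<otimes> x = \<one>"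
    by (metis inv_comm)
  ultimately show ?thesis using c1 by auto
qed

end


lemma enat_cnt_le: "enat (length (filter P xs)) < n \<Longrightarrow> length (filter P ys) \<le> length (filter P xs) \<Longrightarrow> enat (length (filter P ys)) < n"
  using order_le_less_trans enat_ord_simps(1) by blast

context group begin

lemma conj_one: "s \<in> carrier G \<Longrightarrow> Y \<in> carrier G \<Longrightarrow> s \<otimes> Y \<otimes> inv s = \<one> \<Longrightarrow> Y = \<one>"
proof -
  assume a: "s \<in> carrier G" "Y \<in> carrier G" "s \<otimes> Y \<otimes> inv s = \<one>"
  have "s \<otimes> Y = \<one> \<otimes> s" using a inv_solve_right'[of \<one> "s \<otimes> Y" s] by simp
  then show ?thesis using a by simp
qed

lemma sandwich: "c \<in> carrier G \<Longrightarrow> Xe \<in> carrier G \<Longrightarrow> d \<in> carrier G \<Longrightarrow> c \<otimes> Xe \<otimes> d = \<one> \<Longrightarrow> Xe = inv c \<otimes> inv d"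
proof -
  assume a: "c \<in> carrier G" "Xe \<in> carrier G" "d \<in> carrier G" "c \<otimes> Xe \<otimes> d = \<one>"
  have "inv d = c \<otimes> Xe" using a inv_equality[of "c \<otimes> Xe" d] by simp
  then show ?thesis using a inv_solve_left[of Xe c "inv d"] by simp
qed

lemma sg_not: "a \<in> carrier G \<Longrightarrow> sg G a (\<not> e) = inv (sg G a e)"
  by (auto simp: sg_def)

lemma wprod_in: "subgroup S G \<Longrightarrow> a \<in> S \<Longrightarrow> snd ` set ws \<subseteq> S \<Longrightarrow> wprod G a ws \<in> S"
proof (induction ws)
  case Nil then show ?case by (simp add: subgroup.one_closed)
next
  case (Cons p ws)
  obtain e d where p: "p = (e,d)" by (cases p)
  have "sg G a e \<in> S" using Cons.prems by (auto simp: sg_def subgroup.m_inv_closed)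
  then show ?case using Cons p by (auto simp: subgroup.m_closed)
qed

end

definition good :: "('a,'b) monoid_scheme \<Rightarrow> 'a set \<Rightarrow> 'a set \<Rightarrow> 'a set \<Rightarrow> 'a \<Rightarrow> 'a \<Rightarrow> bool" where
  "good G A B C \<sigma> y \<longleftrightarrow> (\<exists>Y. red A B C Y \<and> Y \<noteq> [] \<and> y = prodl G Y \<and> (hd Y \<in> A \<longleftrightarrow> \<sigma> \<notin> A) \<and> (last Y \<in> A \<longleftrightarrow> \<sigma> \<notin> A))"

locale amal_s = amal +
  fixes \<sigma> S and n :: enat
  assumes sig: "\<sigma> \<in> S - C" and sS: "subgroup S G" and SAB: "S = A \<or> S = B"
    and W: "\<And>ws. ws \<noteq> [] \<Longrightarrow> snd ` set ws \<subseteq> C \<Longrightarrow> cyc G ws \<Longrightarrow>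
        enat (length (filter fst ws)) < n \<Longrightarrow> enat (length (filter (\<lambda>w. \<not> fst w) ws)) < n \<Longrightarrow>
        wprod G \<sigma> ws \<noteq> \<one>"
begin

lemma CS: "C \<subseteq> S" using SAB CA CB by auto
lemma sigc: "\<sigma> \<in> carrier G" using sig sS subgroup.subset by blast
lemma S_carr: "S \<subseteq> carrier G" using sS subgroup.subset by blast

lemma segment:
  "snd ` set pre \<subseteq> C \<Longrightarrow> chain G (pre @ [(e,x)]) \<Longrightarrow> enat (length (filter fst (pre @ [(e,x)]))) < n \<Longrightarrow>
   enat (length (filter (\<lambda>w. \<not> fst w) (pre @ [(e,x)]))) < n \<Longrightarrow> wprod G \<sigma> pre \<otimes> sg G \<sigma> e \<notin> C"
proof (induction "length pre" arbitrary: pre e x rule: less_induct)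
  case less
  have prec: "snd ` set pre \<subseteq> carrier G" using less.prems(1) C_carr by auto
  define r where "r = wprod G \<sigma> pre \<otimes> sg G \<sigma> e"
  have rc: "r \<in> carrier G" unfolding r_def using prec sigc by simp
  show ?case
  proof
    assume rC: "wprod G \<sigma> pre \<otimes> sg G \<sigma> e \<in> C"
    then have rC': "r \<in> C" unfolding r_def .
    let ?ws = "pre @ [(e, inv r)]"
    have w1: "wprod G \<sigma> ?ws = \<one>"
      using prec rc sigc by (simp add: wprod_append r_def m_assoc[symmetric])
    show False
    proof (cases "pre \<noteq> [] \<and> fst (hd pre) \<noteq> e \<and> r = \<one>")
      case False
      have ch: "chain G ?ws" by (rule chain_lastfree[OF less.prems(2)])
      have cy: "cyc G ?ws"
      proof (rule chain_cyc[OF ch])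
        show "?ws \<noteq> []" by simp
        assume d: "fst (last ?ws) \<noteq> fst (hd ?ws)"
        then have "pre \<noteq> []" by auto
        then have "fst (hd pre) \<noteq> e" using d by auto
        then have "r \<noteq> \<one>" using False \<open>pre \<noteq> []\<close> by blast
        then show "snd (last ?ws) \<noteq> \<one>" using rc by (auto simp: inv_eq_one_eq)
      qed
      have "snd ` set ?ws \<subseteq> C" using less.prems(1) iC[OF rC'] by auto
      moreover have "length (filter fst ?ws) = length (filter fst (pre @ [(e,x)]))"
        "length (filter (\<lambda>w. \<not> fst w) ?ws) = length (filter (\<lambda>w. \<not> fst w) (pre @ [(e,x)]))" by auto
      ultimately show False using W[OF _ _ cy] w1 less.prems(3,4) by simp
    next
      case True
      then obtain e1 c1 rest where pre: "pre = (e1, c1) # rest" and e1: "e1 \<noteq> e" and r1: "r = \<one>"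
        by (cases pre) auto
      have c1: "c1 \<in> C" using less.prems(1) pre by auto
      have c1c: "c1 \<in> carrier G" using c1 C_carr by auto
      have restc: "snd ` set rest \<subseteq> carrier G" using prec pre by auto
      let ?s = "sg G \<sigma> e1"
      have sc: "?s \<in> carrier G" using sigc by simp
      have se: "sg G \<sigma> e = inv ?s" using e1 sg_not[OF sigc, of e1] by (cases e; cases e1) auto
      show False
      proof (cases rest rule: rev_cases)
        case Nil
        have "chain G ((e1, c1) # (e, x) # [])" using less.prems(2) pre Nil by simp
        then have "c1 \<noteq> \<one>" using chain_head[of G e1 c1 "(e,x)" "[]"] e1 by auto
        moreover have "?s \<otimes> c1 \<otimes> inv ?s = \<one>" using r1 unfolding r_def pre Nil se using c1c sc by simp
        ultimately show False using conj_one[OF sc c1c] by blast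
      next
        case (snoc mid q)
        obtain el cl where q: "q = (el, cl)" by (cases q)
        have cl: "cl \<in> C" using less.prems(1) pre snoc q by auto
        have clc: "cl \<in> carrier G" using cl C_carr by auto
        have midC: "snd ` set mid \<subseteq> C" using less.prems(1) pre snoc by auto
        have midc: "snd ` set mid \<subseteq> carrier G" using midC C_carr by auto
        let ?X = "wprod G \<sigma> mid \<otimes> sg G \<sigma> el"
        have Xc: "?X \<in> carrier G" using midc sigc by simp
        have "r = ?s \<otimes> (c1 \<otimes> ?X \<otimes> cl) \<otimes> inv ?s"
          unfolding r_def pre snoc q se using midc c1c clc sigc sc by (simp add: wprod_append m_assoc)
        then have "c1 \<otimes> ?X \<otimes> cl = \<one>" using r1 conj_one[OF sc] c1c clc Xc by simp
        then have "?X = inv c1 \<otimes> inv cl" using sandwich c1c clc Xc by blast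
        then have XC: "?X \<in> C" using iC[OF c1] iC[OF cl] mC by simp
        have ch: "chain G (mid @ [(el, cl)])"
        proof -
          have "chain G ((e1, c1) # (mid @ [(el, cl)]) @ [(e, x)])" using less.prems(2) pre snoc q by simp
          then show ?thesis using chain_Cons chain_append1 by blast
        qed
        have len: "length mid < length pre" using pre snoc by simp
        have cnt1: "length (filter fst (mid @ [(el, cl)])) \<le> length (filter fst (pre @ [(e,x)]))"
          using pre snoc q by simp
        have cnt2: "length (filter (\<lambda>w. \<not> fst w) (mid @ [(el, cl)])) \<le> length (filter (\<lambda>w. \<not> fst w) (pre @ [(e,x)]))"
          using pre snoc q by simp
        have "?X \<notin> C" using less.hyps[OF len midC ch enat_cnt_le[OF less.prems(3) cnt1] enat_cnt_le[OF less.prems(4) cnt2]] .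
        then show False using XC by simp
      qed
    qed
  qed
qed


lemma runs:
  "L \<noteq> [] \<Longrightarrow> snd (last L) \<notin> C \<Longrightarrow> (\<forall>p \<in> set L. snd p \<in> C \<or> good G A B C \<sigma> (snd p)) \<Longrightarrow> snd ` set pre \<subseteq> C \<Longrightarrow>
   chain G (pre @ L) \<Longrightarrow> enat (length (filter fst (pre @ L))) < n \<Longrightarrow> enat (length (filter (\<lambda>w. \<not> fst w) (pre @ L))) < n \<Longrightarrow>
   \<exists>zs. red A B C zs \<and> zs \<noteq> [] \<and> wprod G \<sigma> pre \<otimes> wprod G \<sigma> L = prodl G zs \<and> (hd zs \<in> A \<longleftrightarrow> \<sigma> \<in> A)"
proof (induction L arbitrary: pre)
  case Nil then show ?case by simp
next
  case (Cons p L')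
  obtain e y where p: "p = (e, y)" by (cases p)
  have prec: "snd ` set pre \<subseteq> carrier G" using Cons.prems(4) C_carr by auto
  have yc: "y \<in> carrier G"
    using Cons.prems(3) p C_carr red_carr prodl_closed unfolding good_def by auto
  have L'c: "snd ` set L' \<subseteq> carrier G"
  proof
    fix w assume "w \<in> snd ` set L'"
    then obtain q where "q \<in> set L'" "w = snd q" by auto
    then show "w \<in> carrier G" using Cons.prems(3) C_carr red_carr prodl_closed unfolding good_def by fastforce
  qed
  show ?case
  proof (cases "y \<in> C")
    case True
    have L'ne: "L' \<noteq> []" using Cons.prems(2) True p by auto
    have "\<exists>zs. red A B C zs \<and> zs \<noteq> [] \<and> wprod G \<sigma> (pre @ [(e,y)]) \<otimes> wprod G \<sigma> L' = prodl G zs \<and> (hd zs \<in> A \<longleftrightarrow> \<sigma> \<in> A)"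
      using Cons.IH[of "pre @ [(e,y)]"] L'ne Cons.prems True p by simp
    moreover have "wprod G \<sigma> (pre @ [(e,y)]) \<otimes> wprod G \<sigma> L' = wprod G \<sigma> pre \<otimes> wprod G \<sigma> (p # L')"
      using prec yc L'c sigc p by (simp add: wprod_append m_assoc)
    ultimately show ?thesis by simp
  next
    case False
    then obtain Y where Y: "red A B C Y" "Y \<noteq> []" "y = prodl G Y" "hd Y \<in> A \<longleftrightarrow> \<sigma> \<notin> A" "last Y \<in> A \<longleftrightarrow> \<sigma> \<notin> A"
      using Cons.prems(3) p unfolding good_def by auto
    have Yc: "set Y \<subseteq> carrier G" using red_carr[OF Y(1)] .
    define r where "r = wprod G \<sigma> pre \<otimes> sg G \<sigma> e"
    have rc: "r \<in> carrier G" unfolding r_def using prec sigc by simp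
    have chp: "chain G (pre @ [(e, y)])" using chain_prefix Cons.prems(5) p by fastforce
    have le1: "length (filter fst (pre @ [(e,y)])) \<le> length (filter fst (pre @ p # L'))" using p by simp
    have le2: "length (filter (\<lambda>w. \<not> fst w) (pre @ [(e,y)])) \<le> length (filter (\<lambda>w. \<not> fst w) (pre @ p # L'))" using p by simp
    have "r \<notin> C" unfolding r_def
      by (rule segment[OF Cons.prems(4) chp enat_cnt_le[OF Cons.prems(6) le1] enat_cnt_le[OF Cons.prems(7) le2]])
    moreover have "r \<in> S" unfolding r_def using wprod_in[OF sS _ ] sig Cons.prems(4) CS sS
      by (auto intro!: subgroup.m_closed[OF sS] simp: sg_def subgroup.m_inv_closed)
    ultimately have r: "r \<in> (A \<union> B) - C" "r \<in> A \<longleftrightarrow> \<sigma> \<in> A" using SAB sig AB by auto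
    show ?thesis
    proof (cases "L' = []")
      case True
      have "red A B C (r # Y)" using r Y by (auto simp: red_Cons)
      moreover have "wprod G \<sigma> pre \<otimes> wprod G \<sigma> (p # L') = prodl G (r # Y)"
        using True p Y(3) prec sigc yc Yc by (simp add: r_def m_assoc)
      ultimately show ?thesis using r by (intro exI[of _ "r # Y"]) auto
    next
      case L'ne: False
      have ch': "chain G ([] @ L')" using chain_append2[of G "pre @ [p]" L'] Cons.prems(5) by simp
      have c1: "enat (length (filter fst ([] @ L'))) < n"
        by (rule enat_cnt_le[OF Cons.prems(6)]) simp
      have c2: "enat (length (filter (\<lambda>w. \<not> fst w) ([] @ L'))) < n"
        by (rule enat_cnt_le[OF Cons.prems(7)]) simp
      obtain zs where zs: "red A B C zs" "zs \<noteq> []" "wprod G \<sigma> [] \<otimes> wprod G \<sigma> L' = prodl G zs" "hd zs \<in> A \<longleftrightarrow> \<sigma> \<in> A"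
        using Cons.IH[of "[]", OF L'ne _ _ _ ch' c1 c2] Cons.prems(2,3) L'ne by auto
      have zsc: "set zs \<subseteq> carrier G" using red_carr[OF zs(1)] .
      have "red A B C (r # Y @ zs)" using r Y zs by (auto simp: red_Cons red_append)
      moreover have "wprod G \<sigma> pre \<otimes> wprod G \<sigma> (p # L') = prodl G (r # Y @ zs)"
      proof -
        have "wprod G \<sigma> L' = prodl G zs" using zs(3) L'c sigc by simp
        then show ?thesis using p Y(3) prec sigc yc Yc zsc L'c by (simp add: r_def m_assoc prodl_append)
      qed
      ultimately show ?thesis using r by (intro exI[of _ "r # Y @ zs"]) auto
    qed
  qed
qed

end


context amal begin

lemma strip_front:
  assumes "red A B C xs" "xs \<noteq> []" "prodl G xs \<notin> A"
  shows "\<exists>L0 ys. L0 \<in> A \<and> red A B C ys \<and> ys \<noteq> [] \<and> hd ys \<notin> A \<and> prodl G xs = L0 \<otimes> prodl G ys"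
proof (cases "hd xs \<in> A")
  case True
  obtain a ys where xs: "xs = a # ys" using assms(2) by (cases xs) auto
  have ac: "a \<in> carrier G" using red_carr[OF assms(1)] xs by auto
  have ys: "ys \<noteq> []" using assms(3) True xs ac by auto
  have r: "red A B C ys" "hd ys \<notin> A" using assms(1) xs ys True by (auto simp: red_Cons)
  show ?thesis using True xs r ys by (intro exI[of _ a] exI[of _ ys]) auto
next
  case False
  have "prodl G xs = \<one> \<otimes> prodl G xs" using red_carr[OF assms(1)] by simp
  then show ?thesis using False assms subgroup.one_closed[OF sA] by blast
qed

lemma strip_back:
  assumes "red A B C xs" "xs \<noteq> []" "hd xs \<notin> A"
  shows "\<exists>R0 ys. R0 \<in> A \<and> red A B C ys \<and> ys \<noteq> [] \<and> hd ys \<notin> A \<and> last ys \<notin> A \<and> prodl G xs = prodl G ys \<otimes> R0"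
proof (cases "last xs \<in> A")
  case True
  obtain ys a where xs: "xs = ys @ [a]" using assms(2) by (metis rev_exhaust)
  have ys: "ys \<noteq> []" using assms(3) True xs by auto
  have "red A B C ys \<and> (last ys \<in> A) \<noteq> (a \<in> A)" using assms(1) ys unfolding xs red_append by simp
  moreover have "a \<in> A" using True xs by simp
  ultimately have r: "red A B C ys" "last ys \<notin> A" by auto
  have "hd ys = hd xs" using xs ys by simp
  moreover have "prodl G xs = prodl G ys \<otimes> a" using red_carr[OF assms(1)] xs by (simp add: prodl_append)
  ultimately show ?thesis using True xs r ys assms(3) by (intro exI[of _ a] exI[of _ ys]) auto
next
  case False
  have "prodl G xs = prodl G xs \<otimes> \<one>" using red_carr[OF assms(1)] by simp
  then show ?thesis using False assms subgroup.one_closed[OF sA] by blast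
qed

lemma decomp:
  assumes "g \<in> generate G (A \<union> B)" "g \<notin> A"
  shows "\<exists>L0 R0 \<alpha> \<sigma> \<beta>. L0 \<in> A \<and> R0 \<in> A \<and> red A B C (\<alpha> @ \<sigma> # \<beta>) \<and> length \<alpha> = length \<beta> \<and>
     hd (\<alpha> @ \<sigma> # \<beta>) \<notin> A \<and> last (\<alpha> @ \<sigma> # \<beta>) \<notin> A \<and> g = L0 \<otimes> (prodl G \<alpha> \<otimes> (\<sigma> \<otimes> (prodl G \<beta> \<otimes> R0)))"
proof -
  have "nf G A B C g" using nf_gen[OF assms(1)] .
  moreover have "g \<notin> C" using assms(2) CA by auto
  ultimately obtain xs where xs: "red A B C xs" "xs \<noteq> []" "g = prodl G xs" unfolding nf_def by blast
  obtain L0 ys where ys: "L0 \<in> A" "red A B C ys" "ys \<noteq> []" "hd ys \<notin> A" "prodl G xs = L0 \<otimes> prodl G ys"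
    using strip_front[OF xs(1,2)] xs(3) assms(2) by blast
  obtain R0 p where p: "R0 \<in> A" "red A B C p" "p \<noteq> []" "hd p \<notin> A" "last p \<notin> A" "prodl G ys = prodl G p \<otimes> R0"
    using strip_back[OF ys(2,3,4)] by blast
  have "odd (length p)" using red_odd[OF p(2,3)] p(4,5) by simp
  then obtain m where m: "length p = Suc (2 * m)" by (metis oddE Suc_eq_plus1)
  define \<alpha> where "\<alpha> = take m p"
  define \<beta> where "\<beta> = drop (Suc m) p"
  define \<sigma> where "\<sigma> = p ! m"
  have pe: "p = \<alpha> @ \<sigma> # \<beta>" unfolding \<alpha>_def \<beta>_def \<sigma>_def using m by (simp add: id_take_nth_drop)
  have len: "length \<alpha> = length \<beta>" unfolding \<alpha>_def \<beta>_def using m by simp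
  have pc: "set p \<subseteq> carrier G" using red_carr[OF p(2)] .
  have ac: "set \<alpha> \<subseteq> carrier G" "\<sigma> \<in> carrier G" "set \<beta> \<subseteq> carrier G" using pc pe by auto
  have R0c: "R0 \<in> carrier G" "L0 \<in> carrier G" using p(1) ys(1) A_carr by auto
  have "g = L0 \<otimes> (prodl G \<alpha> \<otimes> (\<sigma> \<otimes> (prodl G \<beta> \<otimes> R0)))"
    using xs(3) ys(5) p(6) pe ac R0c by (simp add: prodl_append m_assoc)
  then show ?thesis using ys(1) p(1,2,4,5) pe len by metis
qed

end

locale amal_d = amal +
  fixes L0 R0 \<alpha> \<sigma> \<beta>
  assumes L0: "L0 \<in> A" and R0: "R0 \<in> A" and rp: "red A B C (\<alpha> @ \<sigma> # \<beta>)" and len: "length \<alpha> = length \<beta>"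
    and hdp: "hd (\<alpha> @ \<sigma> # \<beta>) \<notin> A" and lastp: "last (\<alpha> @ \<sigma> # \<beta>) \<notin> A"
begin

definition uu :: "bool \<Rightarrow> 'a list" where "uu e = (if e then \<beta> else rev (map (\<lambda>x. inv x) \<alpha>))"
definition vv :: "bool \<Rightarrow> 'a list" where "vv e = (if e then \<alpha> else rev (map (\<lambda>x. inv x) \<beta>))"
definition zl :: "bool \<Rightarrow> 'a" where "zl e = (if e then R0 else inv L0)"
definition zr :: "bool \<Rightarrow> 'a" where "zr e = (if e then L0 else inv R0)"
definition QQ :: "bool \<Rightarrow> 'a" where "QQ e = prodl G (uu e) \<otimes> zl e"
definition PP :: "bool \<Rightarrow> 'a" where "PP e = zr e \<otimes> prodl G (vv e)"

lemma ra: "red A B C \<alpha>" and rs: "\<sigma> \<in> (A \<union> B) - C" and rb: "red A B C \<beta>"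
  and adj1: "\<alpha> \<noteq> [] \<Longrightarrow> (last \<alpha> \<in> A) \<noteq> (\<sigma> \<in> A)" and adj2: "\<beta> \<noteq> [] \<Longrightarrow> (\<sigma> \<in> A) \<noteq> (hd \<beta> \<in> A)"
  using rp unfolding red_append by (auto simp: red_Cons)

lemma carrs: "set \<alpha> \<subseteq> carrier G" "\<sigma> \<in> carrier G" "set \<beta> \<subseteq> carrier G" "L0 \<in> carrier G" "R0 \<in> carrier G"
  using red_carr[OF ra] red_carr[OF rb] rs L0 R0 A_carr B_carr by auto

lemma uv_carr: "set (uu e) \<subseteq> carrier G" "set (vv e) \<subseteq> carrier G" "zl e \<in> carrier G" "zr e \<in> carrier G"
  using carrs unfolding uu_def vv_def zl_def zr_def by auto

lemma QP_carr[simp]: "QQ e \<in> carrier G" "PP e \<in> carrier G"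
  unfolding QQ_def PP_def using uv_carr by auto

lemma PQ_inv: "PP e = inv (QQ (\<not> e))"
  using carrs unfolding PP_def QQ_def uu_def vv_def zl_def zr_def
  by (cases e) (auto simp: prodl_rev_inv inv_mult_group)

lemma sg_g: assumes "g = L0 \<otimes> (prodl G \<alpha> \<otimes> (\<sigma> \<otimes> (prodl G \<beta> \<otimes> R0)))"
  shows "sg G g e = PP e \<otimes> sg G \<sigma> e \<otimes> QQ e"
proof -
  have gT: "g = PP True \<otimes> \<sigma> \<otimes> QQ True"
    using assms carrs unfolding PP_def QQ_def uu_def vv_def zl_def zr_def by (simp add: m_assoc)
  show ?thesis
  proof (cases e)
    case True then show ?thesis using gT by (simp add: sg_def)
  next
    case False
    have "inv g = inv (QQ True) \<otimes> inv \<sigma> \<otimes> inv (PP True)" using gT carrs by (simp add: inv_mult_group m_assoc)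
    also have "inv (QQ True) = PP False" using PQ_inv[of False] by simp
    also have "inv (PP True) = QQ False" using PQ_inv[of True] by simp
    finally show ?thesis using False by (simp add: sg_def)
  qed
qed

lemma inv_notA: "x \<in> carrier G \<Longrightarrow> inv x \<in> A \<longleftrightarrow> x \<in> A" using inv_in_iff[OF sA] by blast

lemma y_good:
  assumes d: "d \<in> A"
  shows "QQ e \<otimes> d \<otimes> PP e' \<in> C \<or> good G A B C \<sigma> (QQ e \<otimes> d \<otimes> PP e')"
proof -
  have dc: "d \<in> carrier G" using d A_carr by auto
  let ?u = "uu e" and ?v = "vv e'" and ?z = "zl e \<otimes> d \<otimes> zr e'"
  have zA: "?z \<in> A" unfolding zl_def zr_def using d L0 R0 iA mA by auto
  have eq: "QQ e \<otimes> d \<otimes> PP e' = prodl G ?u \<otimes> ?z \<otimes> prodl G ?v"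
    unfolding QQ_def PP_def using uv_carr dc by (simp add: m_assoc)
  have lu: "length ?u = length ?v" unfolding uu_def vv_def using len by simp
  have ru: "red A B C ?u" "red A B C ?v" unfolding uu_def vv_def using ra rb red_rev_inv by auto
  have hdpa: "\<alpha> \<noteq> [] \<Longrightarrow> hd \<alpha> \<notin> A" using hdp by simp
  have lastpb: "\<beta> \<noteq> [] \<Longrightarrow> last \<beta> \<notin> A" using lastp by simp
  have hdac: "\<alpha> \<noteq> [] \<Longrightarrow> hd \<alpha> \<in> carrier G" "\<alpha> \<noteq> [] \<Longrightarrow> last \<alpha> \<in> carrier G"
    "\<beta> \<noteq> [] \<Longrightarrow> hd \<beta> \<in> carrier G" "\<beta> \<noteq> [] \<Longrightarrow> last \<beta> \<in> carrier G" using carrs by auto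
  have c5: "?u \<noteq> [] \<Longrightarrow> last ?u \<notin> A \<and> hd ?v \<notin> A"
  proof -
    assume ne: "?u \<noteq> []"
    then have ne2: "\<alpha> \<noteq> []" "\<beta> \<noteq> []" using len unfolding uu_def by (cases e; auto)+
    have "last ?u \<notin> A" unfolding uu_def using ne2 hdpa lastpb hdac inv_notA
      by (auto simp: last_rev hd_map)
    moreover have "hd ?v \<notin> A" unfolding vv_def using ne2 hdpa lastpb hdac inv_notA
      by (auto simp: hd_rev last_map)
    ultimately show ?thesis by blast
  qed
  have sigA: "\<sigma> \<in> A \<longleftrightarrow> \<sigma> \<in> A" ..
  have t1: "hd (?u @ [?z]) \<in> A \<longleftrightarrow> \<sigma> \<notin> A"
  proof (cases "?u = []")
    case True
    then have "\<alpha> = []" using len unfolding uu_def by (cases e) auto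
    then have "\<sigma> \<notin> A" using hdp by simp
    then show ?thesis using True zA by simp
  next
    case False
    then have ne2: "\<alpha> \<noteq> []" "\<beta> \<noteq> []" using len unfolding uu_def by (cases e; auto)+
    show ?thesis using False ne2 adj1 adj2 hdac inv_notA unfolding uu_def
      by (cases e) (auto simp: hd_rev last_map)
  qed
  have t2: "last (?z # ?v) \<in> A \<longleftrightarrow> \<sigma> \<notin> A"
  proof (cases "?v = []")
    case True
    then have "\<alpha> = []" using len unfolding vv_def by (cases e') auto
    then have "\<sigma> \<notin> A" using hdp by simp
    then show ?thesis using True zA by simp
  next
    case False
    then have ne2: "\<alpha> \<noteq> []" "\<beta> \<noteq> []" using len unfolding vv_def by (cases e'; auto)+
    show ?thesis using False ne2 adj1 adj2 hdac inv_notA unfolding vv_def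
      by (cases e') (auto simp: last_rev hd_map)
  qed
  have "prodl G ?u \<otimes> ?z \<otimes> prodl G ?v \<in> C \<or>
    (\<exists>ys. red A B C ys \<and> ys \<noteq> [] \<and> prodl G ?u \<otimes> ?z \<otimes> prodl G ?v = prodl G ys \<and>
       (hd ys \<in> A \<longleftrightarrow> hd (?u @ [?z]) \<in> A) \<and> (last ys \<in> A \<longleftrightarrow> last (?z # ?v) \<in> A))"
    by (rule cascade[OF amal_axioms lu ru c5 zA])
  then show ?thesis
  proof
    assume "\<exists>ys. red A B C ys \<and> ys \<noteq> [] \<and> prodl G ?u \<otimes> ?z \<otimes> prodl G ?v = prodl G ys \<and>
       (hd ys \<in> A \<longleftrightarrow> hd (?u @ [?z]) \<in> A) \<and> (last ys \<in> A \<longleftrightarrow> last (?z # ?v) \<in> A)"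
    then obtain ys where ys: "red A B C ys" "ys \<noteq> []" "prodl G ?u \<otimes> ?z \<otimes> prodl G ?v = prodl G ys"
       "hd ys \<in> A \<longleftrightarrow> hd (?u @ [?z]) \<in> A" "last ys \<in> A \<longleftrightarrow> last (?z # ?v) \<in> A" by blast
    have "good G A B C \<sigma> (QQ e \<otimes> d \<otimes> PP e')"
      unfolding good_def eq using ys t1 t2 by blast
    then show ?thesis by blast
  qed (simp add: eq)
qed

end


fun yl :: "(bool \<Rightarrow> 'a) \<Rightarrow> (bool \<Rightarrow> 'a) \<Rightarrow> ('a,'b) monoid_scheme \<Rightarrow> (bool \<times> 'a) list \<Rightarrow> bool \<Rightarrow> (bool \<times> 'a) list" where
  "yl Q P G [] e' = []"
| "yl Q P G ((e,d) # ws) e' = (e, Q e \<otimes>\<^bsub>G\<^esub> d \<otimes>\<^bsub>G\<^esub> P (if ws = [] then e' else fst (hd ws))) # yl Q P G ws e'"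

lemma yl_len[simp]: "length (yl Q P G ws e') = length ws"
  by (induction Q P G ws e' rule: yl.induct) auto

lemma yl_fst: "map fst (yl Q P G ws e') = map fst ws"
  by (induction Q P G ws e' rule: yl.induct) auto

lemma yl_nth: "i < length ws \<Longrightarrow> yl Q P G ws e' ! i =
   (fst (ws!i), Q (fst (ws!i)) \<otimes>\<^bsub>G\<^esub> snd (ws!i) \<otimes>\<^bsub>G\<^esub> P (if Suc i < length ws then fst (ws ! Suc i) else e'))"
proof (induction Q P G ws e' arbitrary: i rule: yl.induct)
  case (2 Q P G e d ws e')
  show ?case
  proof (cases i)
    case 0 then show ?thesis by (cases ws) auto
  next
    case (Suc j) then show ?thesis using 2 by auto
  qed
qed simp

lemma cnt_map_fst: "map fst xs = map fst ys \<Longrightarrow> length (filter P' (map fst xs)) = length (filter P' (map fst ys))"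
  by simp

lemma filter_fst_eq: "map fst xs = map fst ys \<Longrightarrow> length (filter (\<lambda>w. Pr (fst w)) xs) = length (filter (\<lambda>w. Pr (fst w)) ys)"
proof -
  assume "map fst xs = map fst ys"
  then have "length (filter Pr (map fst xs)) = length (filter Pr (map fst ys))" by simp
  then show ?thesis by (simp add: length_filter_map comp_def)
qed

context group begin

lemma tele:
  assumes sgeq: "\<And>e. sg G g e = P e \<otimes> sg G s e \<otimes> Q e" and c: "\<And>e. P e \<in> carrier G" "\<And>e. Q e \<in> carrier G"
    "s \<in> carrier G" "g \<in> carrier G"
  shows "snd ` set ws \<subseteq> carrier G \<Longrightarrow> wprod G g ws \<otimes> P e' = P (if ws = [] then e' else fst (hd ws)) \<otimes> wprod G s (yl Q P G ws e')"
proof (induction ws)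
  case Nil then show ?case using c by simp
next
  case (Cons p ws)
  obtain e d where p: "p = (e, d)" by (cases p)
  have dc: "d \<in> carrier G" using Cons.prems p by auto
  have wc: "snd ` set ws \<subseteq> carrier G" using Cons.prems by auto
  have ylc: "snd ` set (yl Q P G ws e') \<subseteq> carrier G"
  proof
    fix y assume "y \<in> snd ` set (yl Q P G ws e')"
    then obtain i where i: "i < length ws" "y = snd (yl Q P G ws e' ! i)" by (auto simp: in_set_conv_nth)
    have "snd (ws ! i) \<in> carrier G" using wc i(1) by auto
    then show "y \<in> carrier G" using i yl_nth[OF i(1), of Q P G e'] c by simp
  qed
  let ?n = "if ws = [] then e' else fst (hd ws)"
  have "wprod G g (p # ws) \<otimes> P e' = sg G g e \<otimes> d \<otimes> (wprod G g ws \<otimes> P e')"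
    using p dc wc c by (simp add: m_assoc)
  also have "\<dots> = sg G g e \<otimes> d \<otimes> (P ?n \<otimes> wprod G s (yl Q P G ws e'))" using Cons.IH[OF wc] by simp
  also have "\<dots> = P e \<otimes> (sg G s e \<otimes> (Q e \<otimes> d \<otimes> P ?n) \<otimes> wprod G s (yl Q P G ws e'))"
    unfolding sgeq using c dc ylc by (simp add: m_assoc)
  also have "\<dots> = P (if p # ws = [] then e' else fst (hd (p # ws))) \<otimes> wprod G s (yl Q P G (p # ws) e')"
    using p by simp
  finally show ?case .
qed

end

context amal begin

lemma core:
  assumes g: "g \<in> generate G (A \<union> B)" "g \<notin> A"
    and hA: "n_RF_pair (G\<lparr>carrier := A\<rparr>) C n" and hB: "n_RF_pair (G\<lparr>carrier := B\<rparr>) C n"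
    and ws: "ws \<noteq> []" "snd ` set ws \<subseteq> A" "cyc G ws"
    "enat (length (filter fst ws)) < n" "enat (length (filter (\<lambda>w. \<not> fst w) ws)) < n"
  shows "wprod G g ws \<noteq> \<one>"
proof -
  obtain L0 R0 \<alpha> \<sigma> \<beta> where D: "L0 \<in> A" "R0 \<in> A" "red A B C (\<alpha> @ \<sigma> # \<beta>)" "length \<alpha> = length \<beta>"
     "hd (\<alpha> @ \<sigma> # \<beta>) \<notin> A" "last (\<alpha> @ \<sigma> # \<beta>) \<notin> A" "g = L0 \<otimes> (prodl G \<alpha> \<otimes> (\<sigma> \<otimes> (prodl G \<beta> \<otimes> R0)))"
    using decomp[OF g] by blast
  interpret d: amal_d G A B C L0 R0 \<alpha> \<sigma> \<beta>
    by (intro amal_d.intro amal_axioms amal_d_axioms.intro D(1-6))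
  define S where "S = (if \<sigma> \<in> A then A else B)"
  have sS: "subgroup S G" unfolding S_def using sA sB by auto
  have sig: "\<sigma> \<in> S - C" unfolding S_def using d.rs by auto
  have "n_RF_rel (G\<lparr>carrier := S\<rparr>) C n \<sigma>"
    using hA hB sig unfolding S_def n_RF_pair_def by (auto split: if_splits)
  then have Wp: "\<And>ws. ws \<noteq> [] \<Longrightarrow> snd ` set ws \<subseteq> C \<Longrightarrow> cyc G ws \<Longrightarrow>
        enat (length (filter fst ws)) < n \<Longrightarrow> enat (length (filter (\<lambda>w. \<not> fst w) ws)) < n \<Longrightarrow>
        wprod G \<sigma> ws \<noteq> \<one>" using nrf_sub[OF sS] by blast
  interpret s: amal_s G A B C \<sigma> S n
    by (intro amal_s.intro amal_axioms amal_s_axioms.intro sig sS Wp) (auto simp: S_def)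
  have gc: "g \<in> carrier G" using g generate_is_subgroup[of "A \<union> B"] A_carr B_carr subgroup.subset by blast
  have wsc: "snd ` set ws \<subseteq> carrier G" using ws(2) A_carr by auto
  define e1 where "e1 = fst (hd ws)"
  define Ys where "Ys = yl d.QQ d.PP G ws e1"
  have T: "wprod G g ws \<otimes> d.PP e1 = d.PP e1 \<otimes> wprod G \<sigma> Ys"
    using tele[of g d.PP \<sigma> d.QQ, OF d.sg_g[OF D(7)] _ _ d.carrs(2) gc wsc] ws(1) unfolding Ys_def e1_def by simp
  have k: "length Ys = length ws" unfolding Ys_def by simp
  have fsts: "map fst Ys = map fst ws" unfolding Ys_def by (rule yl_fst)
  have nth: "i < length ws \<Longrightarrow> Ys ! i = (fst (ws!i), d.QQ (fst (ws!i)) \<otimes> snd (ws!i) \<otimes> d.PP (fst (ws ! ((i+1) mod length ws))))" for i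
  proof -
    assume i: "i < length ws"
    have "(if Suc i < length ws then fst (ws ! Suc i) else e1) = fst (ws ! ((i+1) mod length ws))"
    proof (cases "Suc i < length ws")
      case False
      then have "Suc i = length ws" using i by simp
      then show ?thesis using ws(1) by (simp add: e1_def hd_conv_nth)
    qed simp
    then show ?thesis unfolding Ys_def using yl_nth[OF i, of d.QQ d.PP G e1] by simp
  qed
  have Ysc: "snd ` set Ys \<subseteq> carrier G"
  proof
    fix y assume "y \<in> snd ` set Ys"
    then obtain i where i: "i < length ws" "y = snd (Ys ! i)" using k by (auto simp: in_set_conv_nth)
    have "snd (ws ! i) \<in> carrier G" using wsc i(1) by auto
    then show "y \<in> carrier G" using i nth[OF i(1)] by simp
  qed
  have cnt1: "enat (length (filter fst Ys)) < n" using ws(4) filter_fst_eq[OF fsts, of id] by simp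
  have cnt2: "enat (length (filter (\<lambda>w. \<not> fst w) Ys)) < n" using ws(5) filter_fst_eq[OF fsts, of Not] by simp
  have cyY: "cyc G Ys" unfolding cyc_def
  proof (intro allI impI)
    fix i assume i: "i < length Ys" and dd: "fst (Ys ! i) \<noteq> fst (Ys ! ((i + 1) mod length Ys))"
    have i': "i < length ws" using i k by simp
    have m: "(i + 1) mod length ws < length ws" by (rule mod_less_divisor) (use ws(1) in simp)
    have dw: "fst (ws ! i) \<noteq> fst (ws ! ((i + 1) mod length ws))" using dd nth[OF i'] nth[OF m] k by simp
    then have d1: "snd (ws ! i) \<noteq> \<one>" using ws(3) i' unfolding cyc_def by blast
    have "d.PP (fst (ws ! ((i + 1) mod length ws))) = inv (d.QQ (fst (ws ! i)))"
      using d.PQ_inv dw by (cases "fst (ws ! i)") auto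
    moreover have "snd (ws ! i) \<in> carrier G" using wsc i' by auto
    ultimately show "snd (Ys ! i) \<noteq> \<one>" using nth[OF i'] d1 conj_one[of "d.QQ (fst (ws ! i))" "snd (ws ! i)"] by auto
  qed
  have goodY: "\<forall>p \<in> set Ys. snd p \<in> C \<or> good G A B C \<sigma> (snd p)"
  proof
    fix p assume "p \<in> set Ys"
    then obtain i where i: "i < length ws" "p = Ys ! i" using k by (auto simp: in_set_conv_nth)
    have "snd (ws ! i) \<in> A" using ws(2) i(1) by auto
    then show "snd p \<in> C \<or> good G A B C \<sigma> (snd p)" using d.y_good i nth[OF i(1)] by simp
  qed
  have Yne: "Ys \<noteq> []" using k ws(1) by auto
  have PiNe: "wprod G \<sigma> Ys \<noteq> \<one>"
  proof (cases "\<forall>p \<in> set Ys. snd p \<in> C")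
    case True
    then have "snd ` set Ys \<subseteq> C" by auto
    then show ?thesis using Wp[OF Yne _ cyY cnt1 cnt2] by blast
  next
    case False
    then obtain j where j: "j < length Ys" "snd (Ys ! j) \<notin> C" by (auto simp: in_set_conv_nth)
    define Zs where "Zs = rotate (Suc j) Ys"
    have Zlen: "length Zs = length Ys" unfolding Zs_def by simp
    have Zne: "Zs \<noteq> []" using Yne Zlen by auto
    have "last Zs = Zs ! (length Ys - 1)" using Zne Zlen by (simp add: last_conv_nth)
    also have "\<dots> = Ys ! ((Suc j + (length Ys - 1)) mod length Ys)" unfolding Zs_def
      by (rule nth_rotate) (use j(1) in simp)
    also have "(Suc j + (length Ys - 1)) mod length Ys = j" using j(1)
      by (metis Suc_pred' add_Suc_shift gr0I length_0_conv less_nat_zero_code mod_add_self2 mod_less Yne)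
    finally have lastZ: "snd (last Zs) \<notin> C" using j by simp
    have chZ: "chain G ([] @ Zs)" unfolding Zs_def using cyc_chain[OF cyc_rotate[OF cyY, of "Suc j"]] by (simp del: rotate_Suc)
    have setZ: "set Zs = set Ys" unfolding Zs_def by (rule set_rotate)
    have c1: "enat (length (filter fst ([] @ Zs))) < n" using cnt1 filter_rotate_len[of fst "Suc j" Ys] unfolding Zs_def by (simp del: rotate_Suc)
    have c2: "enat (length (filter (\<lambda>w. \<not> fst w) ([] @ Zs))) < n" using cnt2 filter_rotate_len[of "\<lambda>w. \<not> fst w" "Suc j" Ys] unfolding Zs_def by (simp del: rotate_Suc)
    obtain zs where zs: "red A B C zs" "zs \<noteq> []" "wprod G \<sigma> [] \<otimes> wprod G \<sigma> Zs = prodl G zs"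
      using s.runs[OF Zne lastZ _ _ chZ c1 c2] goodY setZ by auto
    have Zc: "snd ` set Zs \<subseteq> carrier G" using Ysc setZ by simp
    have "wprod G \<sigma> Zs = prodl G zs" using zs(3) Zc d.carrs(2) by simp
    then have Zn: "wprod G \<sigma> Zs \<noteq> \<one>" using nontriv[OF zs(1,2)] by simp
    define M where "M = map (\<lambda>(e,d). sg G \<sigma> e \<otimes> d) Ys"
    have "wprod G \<sigma> Zs = prodl G (rotate (Suc j) M)"
      unfolding Zs_def wprod_def M_def by (simp only: rotate_map)
    moreover have Mc: "set M \<subseteq> carrier G" unfolding M_def using Ysc d.carrs(2) by auto
    ultimately have "prodl G M \<noteq> \<one>" using Zn prodl_rotate_one[OF Mc, of "Suc j"] by simp
    then show ?thesis unfolding wprod_def M_def .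
  qed
  show ?thesis
  proof
    assume "wprod G g ws = \<one>"
    then have "d.PP e1 = d.PP e1 \<otimes> wprod G \<sigma> Ys" using T by simp
    moreover have "wprod G \<sigma> Ys \<in> carrier G" using Ysc d.carrs(2) by simp
    ultimately show False using PiNe by simp
  qed
qed

end


context amal begin

lemma A_rf:
  assumes hA: "n_RF_pair (G\<lparr>carrier := A\<rparr>) C n" and hB: "n_RF_pair (G\<lparr>carrier := B\<rparr>) C n"
  shows "n_RF_pair (G\<lparr>carrier := generate G (A \<union> B)\<rparr>) A n"
proof -
  have sP: "subgroup (generate G (A \<union> B)) G" using generate_is_subgroup A_carr B_carr by auto
  show ?thesis unfolding n_RF_pair_def
  proof
    fix a assume a: "a \<in> carrier (G\<lparr>carrier := generate G (A \<union> B)\<rparr>) - A"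
    then have a': "a \<in> generate G (A \<union> B)" "a \<notin> A" by auto
    show "n_RF_rel (G\<lparr>carrier := generate G (A \<union> B)\<rparr>) A n a"
      unfolding nrf_sub[OF sP] using a' core[OF a' hA hB] by blast
  qed
qed

end

lemma B_rf:
  assumes am: "amal G A B C" and hA: "n_RF_pair (G\<lparr>carrier := A\<rparr>) C n" and hB: "n_RF_pair (G\<lparr>carrier := B\<rparr>) C n"
  shows "n_RF_pair (G\<lparr>carrier := generate G (A \<union> B)\<rparr>) B n"
  using amal.A_rf[OF amal_swap[OF am] hB hA] by (simp add: Un_commute)

context group begin

lemma rf_trans:
  assumes sH: "subgroup H G" and sP: "subgroup P G" and CH: "C \<subseteq> H" and HP: "H \<subseteq> P"
    and h1: "n_RF_pair (G\<lparr>carrier := H\<rparr>) C n" and h2: "n_RF_pair (G\<lparr>carrier := P\<rparr>) H n"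
  shows "n_RF_pair (G\<lparr>carrier := P\<rparr>) C n"
  unfolding n_RF_pair_def
proof
  fix a assume "a \<in> carrier (G\<lparr>carrier := P\<rparr>) - C"
  then have a: "a \<in> P" "a \<notin> C" by auto
  show "n_RF_rel (G\<lparr>carrier := P\<rparr>) C n a"
  proof (cases "a \<in> H")
    case True
    then have "n_RF_rel (G\<lparr>carrier := H\<rparr>) C n a" using h1 a unfolding n_RF_pair_def by auto
    then show ?thesis using a unfolding nrf_sub[OF sH] nrf_sub[OF sP] by blast
  next
    case False
    then have "n_RF_rel (G\<lparr>carrier := P\<rparr>) H n a" using h2 a unfolding n_RF_pair_def by auto
    then show ?thesis using a CH unfolding nrf_sub[OF sP] by blast
  qed
qed

end

theorem lemma6p3:
  fixes G :: "('a, 'b) monoid_scheme" and k :: nat and n :: enat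
    and H C Gs :: "nat \<Rightarrow> 'a set"
  assumes "group G"
    and "k \<ge> 1"
    and "n \<ge> 2"
    and "Gs 1 = H 1"
    and "\<forall>j \<in> {1..k}. C j \<subseteq> H j \<and> is_internal_amalgam G (Gs (Suc j)) (Gs j) (H (Suc j)) (C j)"
    and "carrier G = Gs (Suc k)"
    and "\<forall>j \<in> {1..k}. n_RF_pair (G\<lparr>carrier := H j\<rparr>) (C j) n \<and>
                      n_RF_pair (G\<lparr>carrier := H (Suc j)\<rparr>) (C j) n"
  shows "n_RF_pair G (Gs k) n \<and> n_RF_pair G (H (Suc k)) n"
proof -
  interpret group G by fact
  have I: "\<And>j. j \<in> {1..k} \<Longrightarrow> C j \<subseteq> H j \<and> is_internal_amalgam G (Gs (Suc j)) (Gs j) (H (Suc j)) (C j)"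
    using assms(5) by blast
  have am: "\<And>j. j \<in> {1..k} \<Longrightarrow> amal G (Gs j) (H (Suc j)) (C j)" using amal_of_internal I by blast
  have gen: "\<And>j. j \<in> {1..k} \<Longrightarrow> generate G (Gs j \<union> H (Suc j)) = Gs (Suc j)"
    using I unfolding is_internal_amalgam_def by blast
  have subP: "\<And>j. j \<in> {1..k} \<Longrightarrow> subgroup (Gs (Suc j)) G" using I unfolding is_internal_amalgam_def by blast
  have R: "\<And>j. j \<in> {1..k} \<Longrightarrow> n_RF_pair (G\<lparr>carrier := H j\<rparr>) (C j) n \<and> n_RF_pair (G\<lparr>carrier := H (Suc j)\<rparr>) (C j) n"
    using assms(7) by blast
  have Q: "1 \<le> j \<Longrightarrow> j \<le> k \<longrightarrow> n_RF_pair (G\<lparr>carrier := Gs j\<rparr>) (C j) n" for j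
  proof (induction j rule: dec_induct)
    case base
    then show ?case using R[of 1] assms(2,4) by auto
  next
    case (step i)
    show ?case
    proof
      assume ik: "Suc i \<le> k"
      have i: "i \<in> {1..k}" using step.hyps ik by auto
      have si: "Suc i \<in> {1..k}" using ik by auto
      have IH: "n_RF_pair (G\<lparr>carrier := Gs i\<rparr>) (C i) n" using step.IH ik by simp
      have hb: "n_RF_pair (G\<lparr>carrier := Gs (Suc i)\<rparr>) (H (Suc i)) n"
        using B_rf[OF am[OF i] IH conjunct2[OF R[OF i]]] gen[OF i] by simp
      have sH: "subgroup (H (Suc i)) G" using amal.sB[OF am[OF i]] .
      have HP: "H (Suc i) \<subseteq> Gs (Suc i)" using gen[OF i] generate.incl[of _ "Gs i \<union> H (Suc i)" G] by blast
      have CH: "C (Suc i) \<subseteq> H (Suc i)" using I[OF si] by blast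
      show "n_RF_pair (G\<lparr>carrier := Gs (Suc i)\<rparr>) (C (Suc i)) n"
        by (rule rf_trans[OF sH subP[OF i] CH HP conjunct1[OF R[OF si]] hb])
    qed
  qed
  have kk: "k \<in> {1..k}" using assms(2) by auto
  have Qk: "n_RF_pair (G\<lparr>carrier := Gs k\<rparr>) (C k) n" using Q[of k] assms(2) by simp
  have Geq: "G\<lparr>carrier := Gs (Suc k)\<rparr> = G" using assms(6) by (metis monoid.surjective partial_object.update_convs(1) partial_object.surjective)
  have "n_RF_pair (G\<lparr>carrier := Gs (Suc k)\<rparr>) (Gs k) n"
    using amal.A_rf[OF am[OF kk] Qk conjunct2[OF R[OF kk]]] gen[OF kk] by simp
  moreover have "n_RF_pair (G\<lparr>carrier := Gs (Suc k)\<rparr>) (H (Suc k)) n"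
    using B_rf[OF am[OF kk] Qk conjunct2[OF R[OF kk]]] gen[OF kk] by simp
  ultimately show ?thesis using Geq by simp
qed


end
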